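(* For every round $k$-sphere $S\subset\mathbb R^n$ there are a classical linkage $\mathcal L$ in $\mathbb R^n$ and a vertex $v\in\mathcal V(\mathcal L)$ such that $S=\mathcal{SC}(\mathcal L,\{v\})$; moreover the map $\rho_v\colon\mathcal C(\mathcal L)\to\mathbb R^n$, $\varphi\mapsto\varphi(v)$, is an isomorphism onto its image $S$.
   Context: A classical linkage in $\mathbb R^n$ is $\mathcal L=(L,\ell,V,\mu)$: $L$ a finite one-dimensional simplicial complex (vertex set $\mathcal V(L)=\mathcal V(\mathcal L)$, edge set $\mathcal E(L)$), $\ell\colon\mathcal E(L)\to(0,\infty)$, $V\subset\mathcal V(L)$ fixed vertices, $\mu\colon V\to\mathbb R^n$. $\mathcal C(\mathcal L)=\{\varphi\colon\mathcal V(L)\to\mathbb R^n\mid\varphi(v)=\mu(v)\ (v\in V),\ |\varphi(v)-\varphi(w)|=\ell(vw)\ (vw\in\mathcal E(L))\}$ and $\mathcal{SC}(\mathcal L,W)=\{\varphi|_W\mid\varphi\in\mathcal C(\mathcal L)\}$. A round $k$-sphere in $\mathbb R^n$ is the set of points at distance $r>0$ from a center point within some $(k+1)$-dimensional affine subspace containing the center. A homeomorphism $g$ is an isomorphism if $g$ and $g^{-1}$ are restrictions of entire rational functions. *)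

theory Defs
  imports "HOL-Analysis.Analysis"
begin

inductive_set poly_funs :: "('a \<Rightarrow> real) set \<Rightarrow> ('a \<Rightarrow> real) set"
  for coords :: "('a \<Rightarrow> real) set" where
  const: "(\<lambda>_. c) \<in> poly_funs coords"
| coord: "f \<in> coords \<Longrightarrow> f \<in> poly_funs coords"
| add: "f \<in> poly_funs coords \<Longrightarrow> g \<in> poly_funs coords \<Longrightarrow> (\<lambda>x. f x + g x) \<in> poly_funs coords"
| mult: "f \<in> poly_funs coords \<Longrightarrow> g \<in> poly_funs coords \<Longrightarrow> (\<lambda>x. f x * g x) \<in> poly_funs coords"

definition vec_coords :: "(real^'n \<Rightarrow> real) set" where
  "vec_coords = {(\<lambda>x. x $ i) | i. True}"

text \<open>Coordinates of the space (R^n)^Vs of maps from the vertex set Vs to R^n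
  (maps are represented as functions nat => real^n that vanish off Vs).\<close>
definition cfg_coords :: "nat set \<Rightarrow> ((nat \<Rightarrow> real^'n) \<Rightarrow> real) set" where
  "cfg_coords Vs = {(\<lambda>\<phi>. \<phi> w $ i) | w i. w \<in> Vs}"

definition classical_linkage ::
  "nat set \<Rightarrow> nat set set \<Rightarrow> (nat set \<Rightarrow> real) \<Rightarrow> nat set \<Rightarrow> (nat \<Rightarrow> real^'n) \<Rightarrow> bool" where
  "classical_linkage Vs E l F mu \<longleftrightarrow>
     finite Vs \<and> E \<noteq> {} \<and>
     (\<forall>e\<in>E. \<exists>a b. a \<noteq> b \<and> a \<in> Vs \<and> b \<in> Vs \<and> e = {a, b}) \<and>
     (\<forall>e\<in>E. l e > 0) \<and> F \<subseteq> Vs"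

definition conf_space ::
  "nat set \<Rightarrow> nat set set \<Rightarrow> (nat set \<Rightarrow> real) \<Rightarrow> nat set \<Rightarrow> (nat \<Rightarrow> real^'n)
   \<Rightarrow> (nat \<Rightarrow> real^'n) set" where
  "conf_space Vs E l F mu =
     {\<phi>. (\<forall>v. v \<notin> Vs \<longrightarrow> \<phi> v = 0) \<and> (\<forall>v\<in>F. \<phi> v = mu v) \<and>
          (\<forall>a b. {a, b} \<in> E \<longrightarrow> dist (\<phi> a) (\<phi> b) = l {a, b})}"

definition round_sphere :: "nat \<Rightarrow> (real^'n) set \<Rightarrow> bool" where
  "round_sphere k S \<longleftrightarrow>
     (\<exists>c r A. r > 0 \<and> affine A \<and> aff_dim A = int (k + 1) \<and> c \<in> A \<and>
        S = {x \<in> A. dist x c = r})"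

definition cfg_isomorphism ::
  "nat set \<Rightarrow> (nat \<Rightarrow> real^'n) set \<Rightarrow> (real^'n) set \<Rightarrow> ((nat \<Rightarrow> real^'n) \<Rightarrow> real^'n) \<Rightarrow> bool" where
  "cfg_isomorphism Vs X Y f \<longleftrightarrow>
     (\<exists>g. homeomorphism X Y f g \<and>
        (\<exists>p. (\<forall>i. (\<lambda>\<phi>. p \<phi> $ i) \<in> poly_funs (cfg_coords Vs)) \<and> (\<forall>\<phi>\<in>X. f \<phi> = p \<phi>)) \<and>
        (\<exists>q. (\<forall>w\<in>Vs. \<forall>i. (\<lambda>x. q x w $ i) \<in> poly_funs vec_coords) \<and>
             (\<forall>x\<in>Y. \<forall>w\<in>Vs. g x w = q x w)))"

end

theory Submission
  imports Defs
begin
lemma key: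
  fixes A :: "(real^'n) set"
  assumes "affine A" "c \<in> A"
  shows "\<exists>U. finite U \<and> (\<forall>x. x \<in> A \<longleftrightarrow> (\<forall>u\<in>U. inner (x - c) u = 0))"
proof -
  define D where "D = (\<lambda>x. x - c) ` A"
  have sD: "subspace D" using affine_diffs_subspace_subtract[OF assms] D_def by simp
  obtain B where B: "B \<subseteq> D\<^sup>\<bottom>" "independent B" "D\<^sup>\<bottom> \<subseteq> span B"
    by (metis maximal_independent_subset)
  have fB: "finite B" using B(2) independent_imp_finite by blast
  have "x \<in> A \<longleftrightarrow> (\<forall>u\<in>B. inner (x - c) u = 0)" for x
  proof
    assume "x \<in> A"
    then have "x - c \<in> D" by (simp add: D_def)
    then show "\<forall>u\<in>B. inner (x - c) u = 0"
      using B(1) by (auto simp: orthogonal_comp_def orthogonal_def inner_commute)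
  next
    assume h: "\<forall>u\<in>B. inner (x - c) u = 0"
    have "span B \<subseteq> {w. inner (x - c) w = 0}"
      by (rule span_minimal) (use h in \<open>auto simp: subspace_def inner_add_right\<close>)
    then have "\<forall>w\<in>span B. inner (x - c) w = 0" by blast
    then have "x - c \<in> D\<^sup>\<bottom>\<^sup>\<bottom>" using B(3)
      by (auto simp: orthogonal_comp_def orthogonal_def inner_commute)
    then have "x - c \<in> D" using orthogonal_comp_self[OF sD] by simp
    then show "x \<in> A" by (auto simp: D_def)
  qed
  then show ?thesis using fB by blast
qed

lemma sqrt_iff: "(a::real) \<ge> 0 \<Longrightarrow> b \<ge> 0 \<Longrightarrow> a = sqrt b \<longleftrightarrow> a^2 = b"
  by auto

lemma dist_sq: "(dist (x::real^'n) (c + u))^2 = (norm (x - c))^2 - 2 * inner (x - c) u + (norm u)^2"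
proof -
  have "dist x (c + u) = norm ((x - c) - u)" by (simp add: dist_norm algebra_simps)
  then show ?thesis by (simp add: power2_norm_eq_inner inner_diff algebra_simps inner_commute)
qed

lemma sph:
  fixes A :: "(real^'n) set"
  assumes r: "r > 0" and U: "\<forall>x. x \<in> A \<longleftrightarrow> (\<forall>u\<in>U. inner (x - c) u = 0)"
    and us: "set us = insert 0 U"
  shows "x \<in> {x\<in>A. dist x c = r} \<longleftrightarrow> (\<forall>u\<in>set us. dist x (c + u) = sqrt (r^2 + (norm u)^2))"
proof -
  have eq: "dist x (c + u) = sqrt (r^2 + (norm u)^2) \<longleftrightarrow>
     (norm (x - c))^2 - 2 * inner (x - c) u + (norm u)^2 = r^2 + (norm u)^2" for u
    using sqrt_iff[of "dist x (c + u)" "r^2 + (norm u)^2"] dist_sq[of x c u] by simp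
  have d: "dist x c = r \<longleftrightarrow> (norm (x - c))^2 = r^2"
    using r by (simp add: dist_norm power2_eq_iff_nonneg)
  show ?thesis
  proof
    assume "x \<in> {x\<in>A. dist x c = r}"
    then show "\<forall>u\<in>set us. dist x (c + u) = sqrt (r^2 + (norm u)^2)"
      using U us d eq by auto
  next
    assume h: "\<forall>u\<in>set us. dist x (c + u) = sqrt (r^2 + (norm u)^2)"
    then have "dist x c = r" using us eq[of 0] d by simp
    moreover have "x \<in> A" using U us h eq d calculation by auto
    ultimately show "x \<in> {x\<in>A. dist x c = r}" by simp
  qed
qed

theorem lemma4p4:
  fixes S :: "(real^'n) set" and k :: nat
  assumes "round_sphere k S"
  shows "\<exists>Vs E l F (mu :: nat \<Rightarrow> real^'n) v.
           classical_linkage Vs E l F mu \<and> v \<in> Vs \<and>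
           S = (\<lambda>\<phi>. \<phi> v) ` conf_space Vs E l F mu \<and>
           cfg_isomorphism Vs (conf_space Vs E l F mu) S (\<lambda>\<phi>. \<phi> v)"
proof -
  obtain c r A where r: "r > 0" and A: "affine A" "c \<in> A" and S: "S = {x \<in> A. dist x c = r}"
    using assms unfolding round_sphere_def by blast
  obtain U where U: "finite U" "\<forall>x. x \<in> A \<longleftrightarrow> (\<forall>u\<in>U. inner (x - c) u = 0)"
    using key[OF A] by blast
  obtain us where us: "set us = insert 0 U" using finite_list U(1) by (metis finite.insertI)
  define m where "m = length us"
  have m1: "m \<ge> 1" using us m_def by (cases us) auto
  define Vs where "Vs = {0..m}"
  define F where "F = {1..m}"
  define E where "E = {{0,j} | j. j \<in> F}"
  define l where "l = (\<lambda>e. sqrt (r^2 + (norm (us ! (Max e - 1)))^2))"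
  define mu :: "nat \<Rightarrow> real^'n" where "mu = (\<lambda>w. c + us ! (w - 1))"
  define g where "g = (\<lambda>x (w::nat). if w = 0 then x else if w \<in> F then mu w else 0)"
  define X where "X = conf_space Vs E l F mu"
  have sphx: "x \<in> S \<longleftrightarrow> (\<forall>u\<in>set us. dist x (c + u) = sqrt (r^2 + (norm u)^2))" for x
    using sph[OF r U(2) us] S by simp
  have lj: "l {0, j} = sqrt (r^2 + (norm (us ! (j - 1)))^2)" if "j \<in> F" for j
    using that by (simp add: l_def F_def max_def)
  have a: "g x \<in> X" if xS: "x \<in> S" for x
    unfolding X_def conf_space_def
  proof (intro CollectI conjI allI impI ballI)
    fix w assume "w \<notin> Vs" then show "g x w = 0" by (auto simp: g_def Vs_def F_def)
  next
    fix w assume "w \<in> F" then show "g x w = mu w" by (auto simp: g_def F_def)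
  next
    fix a b assume "{a, b} \<in> E"
    then obtain j where j: "j \<in> F" "{a,b} = {0,j}" by (auto simp: E_def)
    have j0: "j \<noteq> 0" using j by (auto simp: F_def)
    have u: "us ! (j - 1) \<in> set us" using j by (auto simp: F_def m_def)
    have gj: "g x j = c + us ! (j - 1)" using j j0 by (simp add: g_def mu_def)
    have d: "dist x (g x j) = l {0, j}" using sphx[of x] xS u gj lj[OF j(1)] by simp
    from j(2) have "(a = 0 \<and> b = j) \<or> (a = j \<and> b = 0)" by (auto simp: doubleton_eq_iff)
    then show "dist (g x a) (g x b) = l {a, b}"
      using d j(2) by (auto simp: g_def dist_commute)
  qed
  have b: "\<phi> 0 \<in> S \<and> \<phi> = g (\<phi> 0)" if ph: "\<phi> \<in> X" for \<phi>
  proof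
    have c1: "\<forall>v. v \<notin> Vs \<longrightarrow> \<phi> v = 0" "\<forall>v\<in>F. \<phi> v = mu v"
      "\<forall>a b. {a, b} \<in> E \<longrightarrow> dist (\<phi> a) (\<phi> b) = l {a, b}"
      using ph by (auto simp: X_def conf_space_def)
    show "\<phi> 0 \<in> S" unfolding sphx
    proof
      fix u assume "u \<in> set us"
      then obtain i where i: "i < m" "us ! i = u" by (auto simp: in_set_conv_nth m_def)
      have jF: "Suc i \<in> F" using i by (simp add: F_def)
      then have "{0, Suc i} \<in> E" by (auto simp: E_def)
      then have "dist (\<phi> 0) (\<phi> (Suc i)) = l {0, Suc i}" using c1(3) by blast
      then show "dist (\<phi> 0) (c + u) = sqrt (r^2 + (norm u)^2)"
        using c1(2) jF lj[OF jF] i by (simp add: mu_def)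
    qed
    show "\<phi> = g (\<phi> 0)"
    proof
      fix w show "\<phi> w = g (\<phi> 0) w"
        using c1(1,2) by (auto simp: g_def Vs_def F_def)
    qed
  qed
  have img: "S = (\<lambda>\<phi>. \<phi> 0) ` X"
  proof
    show "S \<subseteq> (\<lambda>\<phi>. \<phi> 0) ` X"
    proof
      fix x assume "x \<in> S"
      then have "g x \<in> X" "g x 0 = x" using a by (auto simp: g_def)
      then show "x \<in> (\<lambda>\<phi>. \<phi> 0) ` X" by (metis image_eqI)
    qed
  qed (use b in auto)
  have gimg: "g ` S = X"
  proof
    show "X \<subseteq> g ` S" using b by (metis image_eqI subsetI)
  qed (use a in auto)
  have homeo: "homeomorphism X S (\<lambda>\<phi>. \<phi> 0) g"
    unfolding homeomorphism_def
  proof (intro conjI)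
    show "\<forall>x\<in>X. g (x 0) = x" using b by auto
    show "(\<lambda>\<phi>. \<phi> 0) ` X = S" using img by simp
    show "continuous_on X (\<lambda>\<phi>. \<phi> 0)"
      by (rule continuous_on_subset[OF continuous_on_product_coordinates]) simp
    show "\<forall>y\<in>S. g y 0 = y" by (simp add: g_def)
    show "g ` S = X" by (rule gimg)
    show "continuous_on S g"
    proof (rule continuous_on_coordinatewise_then_product)
      fix w show "continuous_on S (\<lambda>x. g x w)"
        by (cases "w = 0") (simp_all add: g_def continuous_on_id continuous_on_const)
    qed
  qed
  have lk: "classical_linkage Vs E l F mu"
    unfolding classical_linkage_def
  proof (intro conjI ballI)
    show "finite Vs" by (simp add: Vs_def)
    show "E \<noteq> {}" using m1 by (auto simp: E_def F_def)
    show "F \<subseteq> Vs" by (auto simp: F_def Vs_def)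
    fix e assume "e \<in> E"
    then obtain j where j: "j \<in> F" "e = {0,j}" by (auto simp: E_def)
    show "\<exists>a b. a \<noteq> b \<and> a \<in> Vs \<and> b \<in> Vs \<and> e = {a, b}"
      using j by (intro exI[of _ 0] exI[of _ j]) (auto simp: F_def Vs_def)
    show "l e > 0" using j lj r by (simp add: add_pos_nonneg)
  qed
  have iso: "cfg_isomorphism Vs X S (\<lambda>\<phi>. \<phi> 0)"
    unfolding cfg_isomorphism_def
  proof (intro exI conjI)
    show "homeomorphism X S (\<lambda>\<phi>. \<phi> 0) g" by (rule homeo)
    show "\<forall>i. (\<lambda>\<phi>. \<phi> 0 $ i) \<in> poly_funs (cfg_coords Vs)"
      by (auto intro!: poly_funs.coord simp: cfg_coords_def Vs_def)
    show "\<forall>\<phi>\<in>X. \<phi> 0 = \<phi> 0" by simp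
    show "\<forall>w\<in>Vs. \<forall>i. (\<lambda>x. g x w $ i) \<in> poly_funs vec_coords"
    proof (intro ballI allI)
      fix w i
      show "(\<lambda>x. g x w $ i) \<in> poly_funs vec_coords"
      proof (cases "w = 0")
        case True
        then show ?thesis by (auto intro!: poly_funs.coord simp: g_def vec_coords_def)
      next
        case False
        then have "(\<lambda>x. g x w $ i) = (\<lambda>_. (if w \<in> F then mu w else 0) $ i)"
          by (simp add: g_def)
        then show ?thesis by (simp only: poly_funs.const)
      qed
    qed
    show "\<forall>x\<in>S. \<forall>w\<in>Vs. g x w = g x w" by simp
  qed
  show ?thesis
    using lk img iso unfolding X_def by (intro exI[of _ Vs] exI[of _ E] exI[of _ l] exI[of _ F] exI[of _ mu] exI[of _ 0]) (simp add: Vs_def)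
qed

end
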